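(* Let $V$ be a real vector space with an inner product of signature $(p,q)$ where $p\ge3$ and $q\ge3$. (1) There exists an algebraic curvature tensor $R$ on $V$ which is IP, but which is not spacelike Jordan IP, not timelike Jordan IP, and not mixed Jordan IP. (2) If $p=q$, then there exists an algebraic curvature tensor $R$ on $V$ which is spacelike Jordan IP and timelike Jordan IP but not mixed Jordan IP. (3) If $p>q$, then there exists an algebraic curvature tensor $R$ on $V$ which is spacelike Jordan IP, not timelike Jordan IP, and not mixed Jordan IP.
   Context: An inner product of signature $(p,q)$ is a non-degenerate symmetric bilinear form $(\cdot,\cdot)$ whose maximal negative definite subspaces have dimension $p$ and maximal positive definite subspaces dimension $q$. A $2$-plane $\pi$ is spacelike (resp. timelike, mixed) if the induced form on $\pi$ has signature $(0,2)$ (resp. $(2,0)$, $(1,1)$). An algebraic curvature tensor is $R\in\otimes^4V^*$ with $R(x,y,z,w)=R(z,w,x,y)=-R(y,x,z,w)$ and $R(x,y,z,w)+R(y,z,x,w)+R(z,x,y,w)=0$; the operator $R(x,y)$ is defined by $R(x,y,z,w)=(R(x,y)z,w)$. For a non-degenerate oriented $2$-plane $\pi$ with oriented basis $\{e_1,e_2\}$, $R(\pi):=|(e_1,e_1)(e_2,e_2)-(e_1,e_2)^2|^{-1/2}R(e_1,e_2)$. $R$ is IP if the eigenvalues (counted with multiplicity) of $R(\pi)$ are the same for any two oriented spacelike $2$-planes $\pi$. $R$ is spacelike Jordan IP if for any two oriented spacelike $2$-planes $\pi,\pi'$ the linear maps $R(\pi)$ and $R(\pi')$ are conjugate (have the same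 real Jordan normal form); timelike and mixed Jordan IP are defined analogously using timelike, resp. mixed, $2$-planes. *)

theory Defs
  imports "HOL-Analysis.Analysis" "HOL-Computational_Algebra.Polynomial"
begin

type_synonym ('n) form = "real^('n::finite) \<Rightarrow> real^'n \<Rightarrow> real"

definition neg_def_on :: "('n::finite) form \<Rightarrow> (real^'n) set \<Rightarrow> bool" where
  "neg_def_on g U \<longleftrightarrow> (\<forall>x\<in>U. x \<noteq> 0 \<longrightarrow> g x x < 0)"

definition pos_def_on :: "('n::finite) form \<Rightarrow> (real^'n) set \<Rightarrow> bool" where
  "pos_def_on g U \<longleftrightarrow> (\<forall>x\<in>U. x \<noteq> 0 \<longrightarrow> g x x > 0)"

definition nondeg_on :: "('n::finite) form \<Rightarrow> (real^'n) set \<Rightarrow> bool" where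
  "nondeg_on g W \<longleftrightarrow> (\<forall>x\<in>W. (\<forall>y\<in>W. g x y = 0) \<longrightarrow> x = 0)"

definition has_signature :: "('n::finite) form \<Rightarrow> (real^'n) set \<Rightarrow> nat \<Rightarrow> nat \<Rightarrow> bool" where
  "has_signature g W p q \<longleftrightarrow> subspace W \<and> nondeg_on g W \<and>
     (\<exists>U. subspace U \<and> U \<subseteq> W \<and> neg_def_on g U \<and> dim U = p) \<and>
     (\<forall>U. subspace U \<and> U \<subseteq> W \<and> neg_def_on g U \<longrightarrow> dim U \<le> p) \<and>
     (\<exists>U. subspace U \<and> U \<subseteq> W \<and> pos_def_on g U \<and> dim U = q) \<and>
     (\<forall>U. subspace U \<and> U \<subseteq> W \<and> pos_def_on g U \<longrightarrow> dim U \<le> q)"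

definition inner_product_sig :: "('n::finite) form \<Rightarrow> nat \<Rightarrow> nat \<Rightarrow> bool" where
  "inner_product_sig g p q \<longleftrightarrow> bilinear g \<and> (\<forall>x y. g x y = g y x) \<and> has_signature g UNIV p q"

definition alg_curv_tensor ::
  "(real^('n::finite) \<Rightarrow> real^'n \<Rightarrow> real^'n \<Rightarrow> real^'n \<Rightarrow> real) \<Rightarrow> bool" where
  "alg_curv_tensor R \<longleftrightarrow>
     (\<forall>y z w. linear (\<lambda>x. R x y z w)) \<and> (\<forall>x z w. linear (\<lambda>y. R x y z w)) \<and>
     (\<forall>x y w. linear (\<lambda>z. R x y z w)) \<and> (\<forall>x y z. linear (\<lambda>w. R x y z w)) \<and>
     (\<forall>x y z w. R x y z w = R z w x y) \<and>
     (\<forall>x y z w. R x y z w = - R y x z w) \<and>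
     (\<forall>x y z w. R x y z w + R y z x w + R z x y w = 0)"

definition curv_op :: "('n::finite) form \<Rightarrow> (real^('n::finite) \<Rightarrow> real^'n \<Rightarrow> real^'n \<Rightarrow> real^'n \<Rightarrow> real)
    \<Rightarrow> real^'n \<Rightarrow> real^'n \<Rightarrow> (real^'n \<Rightarrow> real^'n)" where
  "curv_op g R x y = (THE f. linear f \<and> (\<forall>z w. g (f z) w = R x y z w))"

definition plane_op :: "('n::finite) form \<Rightarrow> (real^('n::finite) \<Rightarrow> real^'n \<Rightarrow> real^'n \<Rightarrow> real^'n \<Rightarrow> real)
    \<Rightarrow> real^'n \<Rightarrow> real^'n \<Rightarrow> (real^'n \<Rightarrow> real^'n)" where
  "plane_op g R e1 e2 = (\<lambda>z. (\<bar>g e1 e1 * g e2 e2 - (g e1 e2)^2\<bar> powr (-1/2)) *\<^sub>R curv_op g R e1 e2 z)"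

definition plane_of_sig :: "('n::finite) form \<Rightarrow> nat \<Rightarrow> nat \<Rightarrow> real^'n \<Rightarrow> real^'n \<Rightarrow> bool" where
  "plane_of_sig g a b e1 e2 \<longleftrightarrow>
     (\<forall>s t. s *\<^sub>R e1 + t *\<^sub>R e2 = 0 \<longrightarrow> s = 0 \<and> t = 0) \<and>
     has_signature g (span {e1, e2}) a b"

definition char_poly_map :: "(real^('n::finite) \<Rightarrow> real^'n) \<Rightarrow> complex poly" where
  "char_poly_map f = det (\<chi> i j. (if i = j then [:0, 1:] else 0) - [: complex_of_real (matrix f $ i $ j) :])"

definition same_eigenvalues :: "(real^('n::finite) \<Rightarrow> real^'n) \<Rightarrow> (real^'n \<Rightarrow> real^'n) \<Rightarrow> bool" where
  "same_eigenvalues f h \<longleftrightarrow> (\<forall>c::complex. order c (char_poly_map f) = order c (char_poly_map h))"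

definition conjugate_maps :: "(real^('n::finite) \<Rightarrow> real^'n) \<Rightarrow> (real^'n \<Rightarrow> real^'n) \<Rightarrow> bool" where
  "conjugate_maps f h \<longleftrightarrow> (\<exists>T. linear T \<and> bij T \<and> T \<circ> f = h \<circ> T)"

definition IP :: "('n::finite) form \<Rightarrow> (real^('n::finite) \<Rightarrow> real^'n \<Rightarrow> real^'n \<Rightarrow> real^'n \<Rightarrow> real) \<Rightarrow> bool" where
  "IP g R \<longleftrightarrow> (\<forall>e1 e2 f1 f2. plane_of_sig g 0 2 e1 e2 \<and> plane_of_sig g 0 2 f1 f2 \<longrightarrow>
      same_eigenvalues (plane_op g R e1 e2) (plane_op g R f1 f2))"

definition jordan_IP_sig :: "nat \<Rightarrow> nat \<Rightarrow> ('n::finite) form \<Rightarrow> (real^('n::finite) \<Rightarrow> real^'n \<Rightarrow> real^'n \<Rightarrow> real^'n \<Rightarrow> real) \<Rightarrow> bool" where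
  "jordan_IP_sig a b g R \<longleftrightarrow> (\<forall>e1 e2 f1 f2. plane_of_sig g a b e1 e2 \<and> plane_of_sig g a b f1 f2 \<longrightarrow>
      conjugate_maps (plane_op g R e1 e2) (plane_op g R f1 f2))"

abbreviation "spacelike_jordan_IP \<equiv> jordan_IP_sig 0 2"
abbreviation "timelike_jordan_IP \<equiv> jordan_IP_sig 2 0"
abbreviation "mixed_jordan_IP \<equiv> jordan_IP_sig 1 1"

end

theory Submission
  imports Defs
begin


lemma ifm1: "(if P then a else 0) * (b::'a::semiring_0) = (if P then a*b else 0)" by simp
lemma ifm2: "(b::'a::semiring_0) * (if P then a else 0) = (if P then b*a else 0)" by simp
lemma sqzero_mat_prod:
  fixes C :: "'a::comm_ring_1^'n^'n"
  assumes CC: "C ** C = 0"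
  shows "(mat X - C) ** (mat X + C) = mat (X * X)"
proof -
  have "((mat X - C) ** (mat X + C)) $ i $ j = (mat (X*X) :: 'a^'n^'n) $ i $ j" for i j
  proof -
    have "((mat X - C) ** (mat X + C)) $ i $ j = (\<Sum>k\<in>UNIV. (mat X - C) $ i $ k * (mat X + C) $ k $ j)"
      by (simp add: matrix_matrix_mult_def)
    also have "\<dots> = (\<Sum>k\<in>UNIV. (if i = k then X else 0) * (if k = j then X else 0)
        + ((if i = k then X else 0) * C $ k $ j - C $ i $ k * (if k = j then X else 0)) - C $ i $ k * C $ k $ j)"
      by (rule sum.cong) (auto simp: mat_def algebra_simps)
    also have "\<dots> = (\<Sum>k\<in>UNIV. (if i = k then X else 0) * (if k = j then X else 0))
        + ((\<Sum>k\<in>UNIV. (if i = k then X else 0) * C $ k $ j) - (\<Sum>k\<in>UNIV. C $ i $ k * (if k = j then X else 0))) - (\<Sum>k\<in>UNIV. C $ i $ k * C $ k $ j)"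
      by (simp add: sum.distrib sum_subtractf)
    also have "(\<Sum>k\<in>UNIV. C $ i $ k * C $ k $ j) = 0"
      using CC by (simp add: matrix_matrix_mult_def vec_eq_iff)
    also have "(\<Sum>k\<in>UNIV. (if i = k then X else 0) * C $ k $ j) = X * C $ i $ j"
      by (simp add: ifm1 ifm2)
    also have "(\<Sum>k\<in>UNIV. C $ i $ k * (if k = j then X else 0)) = X * C $ i $ j"
      by (simp add: ifm1 ifm2 mult.commute)
    also have "(\<Sum>k\<in>UNIV. (if i = k then X else 0) * (if k = j then X else 0)) = (if i = j then X * X else 0)"
      by (simp add: ifm1 ifm2)
    finally show ?thesis by (simp add: mat_def)
  qed
  then show ?thesis by (simp add: vec_eq_iff)
qed

lemma degree_det_le:
  fixes M :: "'a::comm_ring_1 poly^'n^'n"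
  assumes "\<And>i j. degree (M $ i $ j) \<le> 1"
  shows "degree (det M) \<le> CARD('n)"
  unfolding det_def
proof (rule degree_sum_le)
  show "finite {p. p permutes (UNIV::'n set)}" by (simp add: finite_permutations)
  fix p assume "p \<in> {p. p permutes (UNIV::'n set)}"
  have "degree (\<Prod>i\<in>UNIV. M $ i $ p i) \<le> (\<Sum>i\<in>UNIV. degree (M $ i $ p i))"
    using degree_prod_sum_le[of UNIV "\<lambda>i. M $ i $ p i"] by (simp add: o_def)
  also have "\<dots> \<le> (\<Sum>i\<in>(UNIV::'n set). 1)" by (rule sum_mono) (use assms in auto)
  finally have 1: "degree (\<Prod>i\<in>UNIV. M $ i $ p i) \<le> CARD('n)" by simp
  have 2: "degree (of_int (sign p) :: 'a poly) = 0"
    by (rule degree_of_int)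
  have "degree (of_int (sign p) * (\<Prod>i\<in>UNIV. M $ i $ p i)) \<le> degree (of_int (sign p) :: 'a poly) + degree (\<Prod>i\<in>UNIV. M $ i $ p i)"
    by (rule degree_mult_le)
  then show "degree (of_int (sign p) * (\<Prod>i\<in>UNIV. M $ i $ p i)) \<le> CARD('n)"
    using 1 2 by linarith
qed

lemma sqzero_order:
  fixes f :: "real^'n \<Rightarrow> real^'n"
  assumes lf: "linear f" and ff: "\<And>x. f (f x) = 0"
  shows "order c (char_poly_map f) = (if c = 0 then CARD('n) else 0)"
proof -
  define A where "A = matrix f"
  have "A ** A = matrix (f \<circ> f)" unfolding A_def using matrix_compose[OF lf lf] by simp
  also have "f \<circ> f = (\<lambda>x. 0)" using ff by auto
  also have "matrix (\<lambda>x. 0::real^'n) = 0" by (simp add: matrix_def vec_eq_iff)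
  finally have AA: "A ** A = 0" .
  define C :: "complex poly^'n^'n" where "C = (\<chi> i j. [: complex_of_real (A $ i $ j) :])"
  have CC: "C ** C = 0"
  proof -
    have "(C ** C) $ i $ j = 0" for i j
    proof -
      have "(C ** C) $ i $ j = (\<Sum>k\<in>UNIV. [: complex_of_real (A $ i $ k) :] * [: complex_of_real (A $ k $ j) :])"
        by (simp add: C_def matrix_matrix_mult_def)
      also have "\<dots> = [: complex_of_real (\<Sum>k\<in>UNIV. A $ i $ k * A $ k $ j) :]"
        by (simp add: mult_to_poly sum_to_poly mult.commute)
      also have "(\<Sum>k\<in>UNIV. A $ i $ k * A $ k $ j) = (A ** A) $ i $ j"
        by (simp add: matrix_matrix_mult_def)
      finally show ?thesis using AA by simp
    qed
    then show ?thesis by (simp add: vec_eq_iff)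
  qed
  define X :: "complex poly" where "X = [:0,1:]"
  define P where "P = det (mat X - C)"
  define Q where "Q = det (mat X + C)"
  have cp: "char_poly_map f = P"
    unfolding char_poly_map_def P_def A_def C_def X_def mat_def
    by (rule arg_cong[where f=det]) (simp add: vec_eq_iff)
  have PQ: "P * Q = X ^ (2 * CARD('n))"
  proof -
    have "P * Q = det (mat (X * X) :: complex poly^'n^'n)" unfolding P_def Q_def
      by (simp add: det_mul[symmetric] sqzero_mat_prod[OF CC])
    also have "\<dots> = (X*X) ^ CARD('n)"
      by (subst det_diagonal) (auto simp: mat_def)
    finally show ?thesis by (simp add: power_mult power2_eq_square[symmetric])
  qed
  have X0: "X ^ (2 * CARD('n)) \<noteq> 0" by (simp add: X_def)
  have P0: "P \<noteq> 0" and Q0: "Q \<noteq> 0" using PQ X0 by auto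
  have dP: "degree P \<le> CARD('n)" unfolding P_def
    by (rule degree_det_le) (auto simp: X_def C_def mat_def degree_diff_le)
  have dQ: "degree Q \<le> CARD('n)" unfolding Q_def
    by (rule degree_det_le) (auto simp: X_def C_def mat_def degree_add_le)
  show ?thesis
  proof (cases "c = 0")
    case True
    have "order 0 (P * Q) = 2 * CARD('n)"
      using PQ order_power_n_n[of 0 "2 * CARD('n)"] by (simp add: X_def)
    then have "order 0 P + order 0 Q = 2 * CARD('n)"
      using order_mult[of P Q 0] P0 Q0 by simp
    moreover have "order 0 P \<le> CARD('n)" using order_degree[OF P0] dP le_trans by blast
    moreover have "order 0 Q \<le> CARD('n)" using order_degree[OF Q0] dQ le_trans by blast
    ultimately show ?thesis using True cp by simp
  next
    case False
    have "poly P c * poly Q c = c ^ (2 * CARD('n))"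
      using arg_cong[OF PQ, of "\<lambda>r. poly r c"] by (simp add: X_def)
    then have "poly P c \<noteq> 0" using False by auto
    then show ?thesis using False cp order_root[of P c] by auto
  qed
qed


definition sbf :: "('n::finite) form \<Rightarrow> bool" where
  "sbf h \<longleftrightarrow> bilinear h \<and> (\<forall>x y. h x y = h y x)"

lemma sbf_linl: "sbf h \<Longrightarrow> linear (\<lambda>x. h x z)"
  unfolding sbf_def bilinear_def by auto
lemma sbf_linr: "sbf h \<Longrightarrow> linear (h z)"
  unfolding sbf_def bilinear_def by auto
lemma sbf_sym: "sbf h \<Longrightarrow> h x y = h y x"
  unfolding sbf_def by auto

lemma sbf_simps:
  assumes "sbf h"
  shows "h (x + y) z = h x z + h y z" "h z (x + y) = h z x + h z y"
    "h (x - y) z = h x z - h y z" "h z (x - y) = h z x - h z y"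
    "h (c *\<^sub>R x) z = c * h x z" "h z (c *\<^sub>R x) = c * h z x"
    "h 0 z = 0" "h z 0 = 0" "h (- x) z = - h x z" "h z (- x) = - h z x"
    "h (sum f S) z = (\<Sum>i\<in>S. h (f i) z)" "h z (sum f S) = (\<Sum>i\<in>S. h z (f i))"
  using linear_add[OF sbf_linl[OF assms]] linear_add[OF sbf_linr[OF assms]]
    linear_diff[OF sbf_linl[OF assms]] linear_diff[OF sbf_linr[OF assms]]
    linear_scale[OF sbf_linl[OF assms]] linear_scale[OF sbf_linr[OF assms]]
    linear_0[OF sbf_linl[OF assms]] linear_0[OF sbf_linr[OF assms]]
    linear_neg[OF sbf_linl[OF assms]] linear_neg[OF sbf_linr[OF assms]]
    linear_sum[OF sbf_linl[OF assms]] linear_sum[OF sbf_linr[OF assms]]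
  by auto

lemma sbf_neg: "sbf h \<Longrightarrow> sbf (\<lambda>x y. - h x y)"
  unfolding sbf_def bilinear_def
  by (auto intro: linear_compose_neg)

lemma span_image_repr:
  fixes w :: "nat \<Rightarrow> 'a::real_vector"
  assumes "y \<in> span (w ` {..<k})"
  shows "\<exists>c. y = (\<Sum>i<k. c i *\<^sub>R w i)"
  using assms
proof (induction k arbitrary: y)
  case 0
  then show ?case by simp
next
  case (Suc k)
  have "w ` {..<Suc k} = insert (w k) (w ` {..<k})" by (simp add: lessThan_Suc)
  with Suc.prems obtain t where "y - t *\<^sub>R w k \<in> span (w ` {..<k})"
    using span_breakdown_eq by metis
  then obtain c where c: "y - t *\<^sub>R w k = (\<Sum>i<k. c i *\<^sub>R w i)" using Suc.IH by blast
  define c' where "c' = c(k := t)"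
  have "(\<Sum>i<Suc k. c' i *\<^sub>R w i) = (\<Sum>i<k. c' i *\<^sub>R w i) + t *\<^sub>R w k"
    by (simp add: c'_def)
  also have "(\<Sum>i<k. c' i *\<^sub>R w i) = (\<Sum>i<k. c i *\<^sub>R w i)"
    by (rule sum.cong) (auto simp: c'_def)
  finally show ?case using c by (metis diff_add_cancel)
qed

lemma sum_in_span_image:
  fixes w :: "nat \<Rightarrow> 'a::real_vector"
  shows "(\<Sum>i<k. c i *\<^sub>R w i) \<in> span (w ` {..<k})"
  by (intro span_sum span_mul span_base) auto

definition orthfam :: "('n::finite) form \<Rightarrow> (nat \<Rightarrow> real^'n) \<Rightarrow> nat \<Rightarrow> bool" where
  "orthfam h w k \<longleftrightarrow> (\<forall>i<k. \<forall>j<k. i \<noteq> j \<longrightarrow> h (w i) (w j) = 0)"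

lemma orthfam_coeff:
  assumes "sbf h" "orthfam h w k" "j < k"
  shows "h (\<Sum>i<k. c i *\<^sub>R w i) (w j) = c j * h (w j) (w j)"
proof -
  have "h (\<Sum>i<k. c i *\<^sub>R w i) (w j) = (\<Sum>i<k. c i * h (w i) (w j))"
    using assms(1) by (simp add: sbf_simps)
  also have "\<dots> = (\<Sum>i\<in>{j}. c i * h (w i) (w j))"
    by (rule sum.mono_neutral_right) (use assms in \<open>auto simp: orthfam_def\<close>)
  finally show ?thesis by simp
qed

lemma orthfam_quad:
  assumes "sbf h" "orthfam h w k"
  shows "h (\<Sum>i<k. c i *\<^sub>R w i) (\<Sum>i<k. c i *\<^sub>R w i) = (\<Sum>j<k. (c j)^2 * h (w j) (w j))"
proof -
  have "h (\<Sum>i<k. c i *\<^sub>R w i) (\<Sum>j<k. c j *\<^sub>R w j) = (\<Sum>j<k. c j * h (\<Sum>i<k. c i *\<^sub>R w i) (w j))"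
    by (simp only: sbf_simps(12)[OF assms(1)] sbf_simps(6)[OF assms(1)])
  also have "\<dots> = (\<Sum>j<k. (c j)^2 * h (w j) (w j))"
    by (rule sum.cong) (use orthfam_coeff[OF assms] in \<open>auto simp: power2_eq_square\<close>)
  finally show ?thesis .
qed

lemma orthfam_posdef:
  assumes "sbf h" "orthfam h w k" "\<And>i. i < k \<Longrightarrow> h (w i) (w i) > 0"
  shows "pos_def_on h (span (w ` {..<k}))"
  unfolding pos_def_on_def
proof (intro ballI impI)
  fix y assume y: "y \<in> span (w ` {..<k})" "y \<noteq> 0"
  obtain c where c: "y = (\<Sum>i<k. c i *\<^sub>R w i)" using span_image_repr[OF y(1)] by blast
  obtain j where j: "j < k" "c j \<noteq> 0"
    using y(2) c by (metis (no_types, lifting) lessThan_iff scale_zero_left sum.neutral)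
  have "h y y = (\<Sum>j<k. (c j)^2 * h (w j) (w j))" using orthfam_quad[OF assms(1,2)] c by simp
  also have "\<dots> > 0"
  proof (rule sum_pos2[of "{..<k}" j])
    show "(c j)^2 * h (w j) (w j) > 0" using j assms(3) by simp
  qed (use j assms(3) in \<open>auto intro!: mult_nonneg_nonneg simp: less_imp_le\<close>)
  finally show "h y y > 0" .
qed

lemma orthfam_dim:
  assumes "sbf h" "orthfam h w k" "\<And>i. i < k \<Longrightarrow> h (w i) (w i) > 0"
  shows "dim (span (w ` {..<k})) = k"
  using assms(2,3)
proof (induction k)
  case 0
  then show ?case by simp
next
  case (Suc k)
  have ok: "orthfam h w k" using Suc.prems(1) by (auto simp: orthfam_def)
  have IH: "dim (span (w ` {..<k})) = k" using Suc.IH[OF ok] Suc.prems(2) by auto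
  have "w k \<notin> span (w ` {..<k})"
  proof
    assume "w k \<in> span (w ` {..<k})"
    then obtain c where c: "w k = (\<Sum>i<k. c i *\<^sub>R w i)" using span_image_repr by blast
    have "h (w k) (w k) = (\<Sum>i<k. c i * h (w i) (w k))"
      using assms(1) by (subst (1) c) (simp add: sbf_simps)
    also have "\<dots> = 0" using Suc.prems(1) by (auto simp: orthfam_def intro!: sum.neutral)
    finally show False using Suc.prems(2)[of k] by simp
  qed
  moreover have "w ` {..<Suc k} = insert (w k) (w ` {..<k})" by (simp add: lessThan_Suc)
  ultimately show ?case using IH by (simp add: dim_insert dim_span)
qed



lemma gram_schmidt:
  assumes h: "sbf h" and "subspace S" "pos_def_on h S" "k \<le> dim S"
  shows "\<exists>w. (\<forall>i<k. w i \<in> S \<and> h (w i) (w i) = 1) \<and> orthfam h w k"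
  using assms(2-4)
proof (induction k arbitrary: S)
  case 0
  then show ?case by (auto simp: orthfam_def)
next
  case (Suc k)
  have "\<not> S \<subseteq> {0}"
  proof
    assume "S \<subseteq> {0}"
    then have "dim S = 0" using dim_eq_0[of S] by blast
    with Suc.prems(3) show False by linarith
  qed
  then obtain x where x: "x \<in> S" "x \<noteq> 0" by auto
  have hx: "h x x > 0" using Suc.prems(2) x unfolding pos_def_on_def by auto
  define x0 where "x0 = (1 / sqrt (h x x)) *\<^sub>R x"
  have x0S: "x0 \<in> S" unfolding x0_def using Suc.prems(1) x(1) by (simp add: subspace_scale)
  have hx0: "h x0 x0 = 1" unfolding x0_def using hx h
    by (simp add: sbf_simps power2_eq_square[symmetric] real_sqrt_pow2 del: real_sqrt_pow2_iff)
  define S' where "S' = {y\<in>S. h x0 y = 0}"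
  have sub': "subspace S'" unfolding S'_def subspace_def
    using Suc.prems(1) h by (auto simp: sbf_simps subspace_add subspace_scale subspace_0)
  have pd': "pos_def_on h S'" using Suc.prems(2) unfolding pos_def_on_def S'_def by auto
  have "S \<subseteq> span (insert x0 S')"
  proof
    fix y assume y: "y \<in> S"
    have "y - h x0 y *\<^sub>R x0 \<in> S'" unfolding S'_def
      using y x0S Suc.prems(1) h hx0 by (auto simp: sbf_simps subspace_diff subspace_scale)
    then have "y - h x0 y *\<^sub>R x0 \<in> span (insert x0 S')" by (meson span_base insertI2)
    moreover have "h x0 y *\<^sub>R x0 \<in> span (insert x0 S')" by (meson span_base insertI1 span_mul)
    ultimately have "(y - h x0 y *\<^sub>R x0) + h x0 y *\<^sub>R x0 \<in> span (insert x0 S')" by (rule span_add)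
    then show "y \<in> span (insert x0 S')" by simp
  qed
  then have "dim S \<le> dim (span (insert x0 S'))" by (rule dim_subset)
  also have "\<dots> \<le> dim S' + 1" by (simp add: dim_span dim_insert)
  finally have "k \<le> dim S'" using Suc.prems(3) by simp
  then obtain w' where w': "\<forall>i<k. w' i \<in> S' \<and> h (w' i) (w' i) = 1" "orthfam h w' k"
    using Suc.IH[OF sub' pd'] by blast
  define w where "w = w'(k := x0)"
  have "\<forall>i<Suc k. w i \<in> S \<and> h (w i) (w i) = 1"
    using w'(1) x0S hx0 by (auto simp: w_def less_Suc_eq S'_def)
  moreover have "orthfam h w (Suc k)"
    unfolding orthfam_def
  proof (intro allI impI)
    fix i j assume ij: "i < Suc k" "j < Suc k" "i \<noteq> j"
    show "h (w i) (w j) = 0"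
    proof (cases "i = k")
      case True
      then have "j < k" using ij by auto
      then show ?thesis using True w'(1) by (auto simp: w_def S'_def)
    next
      case False
      note iF = False
      show ?thesis
      proof (cases "j = k")
        case True
        then have "i < k" using ij iF by auto
        then show ?thesis using True w'(1) iF sbf_sym[OF h] by (auto simp: w_def S'_def)
      next
        case False
        then show ?thesis using iF ij w'(2) by (auto simp: w_def orthfam_def)
      qed
    qed
  qed
  ultimately show ?case by blast
qed



lemma ips_sbf: "inner_product_sig g p q \<Longrightarrow> sbf g"
  unfolding inner_product_sig_def sbf_def by auto

lemma ips_nondeg: "inner_product_sig g p q \<Longrightarrow> (\<forall>y. g x y = 0) \<Longrightarrow> x = 0"
  unfolding inner_product_sig_def has_signature_def nondeg_on_def by auto

lemma neg_pos_def: "neg_def_on g U \<longleftrightarrow> pos_def_on (\<lambda>x y. - g x y) U"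
  unfolding neg_def_on_def pos_def_on_def by auto

lemma orthfam_neg: "orthfam (\<lambda>x y. - g x y) w k \<longleftrightarrow> orthfam g w k"
  unfolding orthfam_def by auto

lemma frame_exists:
  assumes ips: "inner_product_sig g p q"
  shows "\<exists>u v. (\<forall>i<p. g (u i) (u i) = -1) \<and> orthfam g u p \<and> (\<forall>j<q. g (v j) (v j) = 1) \<and> orthfam g v q
     \<and> (\<forall>i<p. \<forall>j<q. g (u i) (v j) = 0)"
proof -
  have h: "sbf g" using ips_sbf[OF ips] .
  have sig: "has_signature g UNIV p q" using ips unfolding inner_product_sig_def by auto
  obtain U where U: "subspace U" "neg_def_on g U" "dim U = p"
    using sig unfolding has_signature_def by auto
  obtain W where W: "subspace W" "pos_def_on g W" "dim W = q"
    using sig unfolding has_signature_def by auto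
  obtain u where u: "\<forall>i<p. u i \<in> U \<and> - g (u i) (u i) = 1" "orthfam (\<lambda>x y. - g x y) u p"
    using gram_schmidt[OF sbf_neg[OF h] U(1), of p] U(2,3) by (auto simp: neg_pos_def)
  have uu: "\<forall>i<p. g (u i) (u i) = -1" using u(1) by auto
  have uo: "orthfam g u p" using u(2) orthfam_neg by blast
  define P where "P = (\<lambda>w. w + (\<Sum>i<p. g w (u i) *\<^sub>R u i))"
  have linP: "linear P"
    by (rule linearI) (auto simp: P_def sbf_simps[OF h] algebra_simps sum.distrib scaleR_sum_right)
  have Pu: "g (P w) (u j) = 0" if "j < p" for w j
  proof -
    have "g (P w) (u j) = g w (u j) + g (\<Sum>i<p. g w (u i) *\<^sub>R u i) (u j)"
      by (simp add: P_def sbf_simps[OF h])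
    also have "g (\<Sum>i<p. g w (u i) *\<^sub>R u i) (u j) = g w (u j) * g (u j) (u j)"
      by (rule orthfam_coeff[OF h uo that])
    finally show ?thesis using uu that by simp
  qed
  have PP: "g (P w) (P w) = g w w + (\<Sum>i<p. (g w (u i))^2)" for w
  proof -
    have "g (P w) (P w) = g (P w) w + (\<Sum>i<p. g w (u i) * g (P w) (u i))"
      by (subst (2) P_def) (simp add: sbf_simps[OF h])
    also have "(\<Sum>i<p. g w (u i) * g (P w) (u i)) = 0" using Pu by simp
    also have "g (P w) w = g w w + (\<Sum>i<p. (g w (u i))^2)"
      by (simp add: P_def sbf_simps[OF h] power2_eq_square sbf_sym[OF h, of "u _" w])
    finally show ?thesis by simp
  qed
  have Ppos: "g (P w) (P w) > 0" if "w \<in> W" "w \<noteq> 0" for w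
  proof -
    have "g w w > 0" using W(2) that unfolding pos_def_on_def by auto
    moreover have "(\<Sum>i<p. (g w (u i))^2) \<ge> 0" by (simp add: sum_nonneg)
    ultimately show ?thesis using PP by simp
  qed
  define S where "S = P ` W"
  have subS: "subspace S" unfolding S_def by (rule linear_subspace_image[OF linP W(1)])
  have pdS: "pos_def_on g S" unfolding pos_def_on_def S_def
  proof (intro ballI impI)
    fix y assume "y \<in> P ` W" "y \<noteq> 0"
    then obtain w where w: "w \<in> W" "y = P w" by auto
    have "w \<noteq> 0" using w \<open>y \<noteq> 0\<close> linear_0[OF linP] by auto
    then show "g y y > 0" using Ppos w by simp
  qed
  have injP: "inj_on P (span W)"
  proof -
    have "inj_on P W"
    proof (rule inj_onI)
      fix x y assume xy: "x \<in> W" "y \<in> W" "P x = P y"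
      have "P (x - y) = 0" using xy(3) linear_diff[OF linP] by simp
      moreover have "x - y \<in> W" using xy W(1) by (simp add: subspace_diff)
      ultimately show "x = y" using Ppos[of "x - y"] h by (auto simp: sbf_simps)
    qed
    then show ?thesis using W(1) by (simp add: span_eq_iff[THEN iffD2])
  qed
  have dimS: "dim S = q" unfolding S_def using dim_image_eq[OF linP injP] W(3) by simp
  obtain v where v: "\<forall>j<q. v j \<in> S \<and> g (v j) (v j) = 1" "orthfam g v q"
    using gram_schmidt[OF h subS pdS, of q] dimS by auto
  have "\<forall>i<p. \<forall>j<q. g (u i) (v j) = 0"
  proof (intro allI impI)
    fix i j assume ij: "i < p" "j < q"
    then obtain w where "v j = P w" using v(1) unfolding S_def by auto
    then show "g (u i) (v j) = 0" using Pu[OF ij(1)] sbf_sym[OF h] by metis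
  qed
  then show ?thesis using uu uo v by blast
qed



definition frame :: "('n::finite) form \<Rightarrow> nat \<Rightarrow> nat \<Rightarrow> (nat \<Rightarrow> real^'n) \<Rightarrow> (nat \<Rightarrow> real^'n) \<Rightarrow> bool" where
  "frame g p q u v \<longleftrightarrow> sbf g \<and> (\<forall>x. (\<forall>y. g x y = 0) \<longrightarrow> x = 0) \<and>
     (\<forall>i<p. g (u i) (u i) = -1) \<and> orthfam g u p \<and> (\<forall>j<q. g (v j) (v j) = 1) \<and> orthfam g v q
     \<and> (\<forall>i<p. \<forall>j<q. g (u i) (v j) = 0)"

definition Bf :: "('n::finite) form \<Rightarrow> (nat \<Rightarrow> real^'n) \<Rightarrow> (nat \<Rightarrow> real^'n) \<Rightarrow> nat \<Rightarrow> real^'n \<Rightarrow> real^'n \<Rightarrow> real" where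
  "Bf g u v m x y = (\<Sum>i<m. g x (u i + v i) * g y (u i + v i))"

definition phiv :: "('n::finite) form \<Rightarrow> (nat \<Rightarrow> real^'n) \<Rightarrow> (nat \<Rightarrow> real^'n) \<Rightarrow> nat \<Rightarrow> real^'n \<Rightarrow> real^'n" where
  "phiv g u v m x = (\<Sum>i<m. g x (u i + v i) *\<^sub>R (u i + v i))"

definition Rt :: "('n::finite) form \<Rightarrow> (nat \<Rightarrow> real^'n) \<Rightarrow> (nat \<Rightarrow> real^'n) \<Rightarrow> nat \<Rightarrow>
   real^'n \<Rightarrow> real^'n \<Rightarrow> real^'n \<Rightarrow> real^'n \<Rightarrow> real" where
  "Rt g u v m x y z w = Bf g u v m y z * Bf g u v m x w - Bf g u v m x z * Bf g u v m y w"

definition Fm :: "('n::finite) form \<Rightarrow> real^'n \<Rightarrow> real^'n \<Rightarrow> real^'n \<Rightarrow> real^'n" where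
  "Fm g a b z = g b z *\<^sub>R a - g a z *\<^sub>R b"

lemma frame_sbf: "frame g p q u v \<Longrightarrow> sbf g" unfolding frame_def by auto
lemma frame_nd: "frame g p q u v \<Longrightarrow> (\<And>y. g x y = 0) \<Longrightarrow> x = 0" unfolding frame_def by auto

lemma frame_vals:
  assumes "frame g p q u v"
  shows "i < p \<Longrightarrow> g (u i) (u i) = -1" "j < q \<Longrightarrow> g (v j) (v j) = 1"
    "i < p \<Longrightarrow> j < p \<Longrightarrow> i \<noteq> j \<Longrightarrow> g (u i) (u j) = 0"
    "i < q \<Longrightarrow> j < q \<Longrightarrow> i \<noteq> j \<Longrightarrow> g (v i) (v j) = 0"
    "i < p \<Longrightarrow> j < q \<Longrightarrow> g (u i) (v j) = 0"
    "i < p \<Longrightarrow> j < q \<Longrightarrow> g (v j) (u i) = 0"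
  using assms unfolding frame_def orthfam_def sbf_def by auto

lemma n_v:
  assumes "frame g p q u v" "m \<le> p" "m \<le> q" "i < m" "j < q"
  shows "g (u i + v i) (v j) = (if i = j then 1 else 0)"
  using assms frame_vals[OF assms(1)] by (auto simp: sbf_simps[OF frame_sbf[OF assms(1)]])

lemma n_u:
  assumes "frame g p q u v" "m \<le> p" "m \<le> q" "i < m" "j < p"
  shows "g (u i + v i) (u j) = (if i = j then -1 else 0)"
  using assms frame_vals[OF assms(1)] by (auto simp: sbf_simps[OF frame_sbf[OF assms(1)]])

lemma n_n:
  assumes "frame g p q u v" "m \<le> p" "m \<le> q" "i < m" "j < m"
  shows "g (u i + v i) (u j + v j) = 0"
  using assms frame_vals[OF assms(1)] by (cases "i = j") (auto simp: sbf_simps[OF frame_sbf[OF assms(1)]])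

lemma phiv_g:
  assumes "sbf g"
  shows "g (phiv g u v m x) y = Bf g u v m x y"
  unfolding phiv_def Bf_def using assms by (simp add: sbf_simps sbf_sym[OF assms, of _ y])

lemma phiv_n:
  assumes "frame g p q u v" "m \<le> p" "m \<le> q" "j < m"
  shows "g (phiv g u v m x) (u j + v j) = 0"
  unfolding phiv_def using assms n_n[OF assms(1-3)]
  by (simp only: sbf_simps(11,5)[OF frame_sbf[OF assms(1)]]) (auto intro!: sum.neutral)

lemma phiv_phiv:
  assumes "frame g p q u v" "m \<le> p" "m \<le> q"
  shows "g (phiv g u v m x) (phiv g u v m y) = 0"
  by (subst (2) phiv_def) (simp only: sbf_simps(12,6)[OF frame_sbf[OF assms(1)]], simp add: phiv_n[OF assms])

lemma linear_phiv: "sbf g \<Longrightarrow> linear (phiv g u v m)"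
  by (rule linearI) (auto simp: phiv_def sbf_simps algebra_simps sum.distrib scaleR_sum_right)

lemma Bf_simps:
  assumes "sbf g"
  shows "Bf g u v m (x + y) z = Bf g u v m x z + Bf g u v m y z"
    "Bf g u v m (c *\<^sub>R x) z = c * Bf g u v m x z"
    "Bf g u v m x y = Bf g u v m y x"
    "Bf g u v m z (x + y) = Bf g u v m z x + Bf g u v m z y"
    "Bf g u v m z (c *\<^sub>R x) = c * Bf g u v m z x"
  unfolding Bf_def using assms by (auto simp: sbf_simps algebra_simps sum.distrib sum_distrib_left)

lemma alg_curv_Rt:
  assumes "sbf g"
  shows "alg_curv_tensor (Rt g u v m)"
proof -
  note B = Bf_simps[OF assms]
  show ?thesis unfolding alg_curv_tensor_def Rt_def
    by (intro conjI allI linearI) (simp_all add: B(1,2,4,5) algebra_simps B(3)[of y x for x y])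
qed



lemma linear_Fm: "sbf g \<Longrightarrow> linear (Fm g a b)"
  by (rule linearI) (auto simp: Fm_def sbf_simps algebra_simps)

lemma g_Fm: "sbf g \<Longrightarrow> g (Fm g a b z) w = g b z * g a w - g a z * g b w"
  by (simp add: Fm_def sbf_simps)

lemma curv_op_Rt:
  assumes fr: "frame g p q u v"
  shows "curv_op g (Rt g u v m) x y = Fm g (phiv g u v m x) (phiv g u v m y)"
proof -
  have h: "sbf g" using frame_sbf[OF fr] .
  let ?F = "Fm g (phiv g u v m x) (phiv g u v m y)"
  have P: "linear ?F \<and> (\<forall>z w. g (?F z) w = Rt g u v m x y z w)"
    using linear_Fm[OF h] by (simp add: g_Fm[OF h] phiv_g[OF h] Rt_def sbf_sym[OF h, of "phiv g u v m _"])
  show ?thesis unfolding curv_op_def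
  proof (rule the_equality)
    show "linear ?F \<and> (\<forall>z w. g (?F z) w = Rt g u v m x y z w)" by (rule P)
  next
    fix f assume f: "linear f \<and> (\<forall>z w. g (f z) w = Rt g u v m x y z w)"
    show "f = ?F"
    proof
      fix z
      have "\<And>w. g (f z - ?F z) w = 0" using f P h by (simp add: sbf_simps)
      then have "f z - ?F z = 0" by (rule frame_nd[OF fr])
      then show "f z = ?F z" by simp
    qed
  qed
qed

lemma Fm_scale: "sbf g \<Longrightarrow> (\<lambda>z. c *\<^sub>R Fm g a b z) = Fm g (c *\<^sub>R a) b"
  by (rule ext) (simp add: Fm_def sbf_simps algebra_simps)

lemma plane_op_Rt:
  assumes fr: "frame g p q u v"
  shows "plane_op g (Rt g u v m) e1 e2 =
    Fm g ((\<bar>g e1 e1 * g e2 e2 - (g e1 e2)^2\<bar> powr (-1/2)) *\<^sub>R phiv g u v m e1) (phiv g u v m e2)"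
  unfolding plane_op_def curv_op_Rt[OF fr] Fm_scale[OF frame_sbf[OF fr]] ..

lemma Fm_sq:
  assumes "sbf g" "g a a = 0" "g b b = 0" "g a b = 0"
  shows "Fm g a b (Fm g a b z) = 0"
  using assms by (simp add: Fm_def sbf_simps sbf_sym[OF assms(1), of b a])

lemma Fm_dep: "sbf g \<Longrightarrow> Fm g (s *\<^sub>R a) (t *\<^sub>R a) = (\<lambda>z. 0)"
  by (rule ext) (simp add: Fm_def sbf_simps)

lemma IP_Rt:
  assumes fr: "frame g p q u v" and m: "m \<le> p" "m \<le> q"
  shows "IP g (Rt g u v m)"
proof -
  have h: "sbf g" using frame_sbf[OF fr] .
  have sq: "\<forall>c. order c (char_poly_map (plane_op g (Rt g u v m) e1 e2)) = (if c = 0 then CARD('a) else 0)"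
    for e1 e2 :: "real^'a"
  proof
    fix c
    let ?k = "\<bar>g e1 e1 * g e2 e2 - (g e1 e2)^2\<bar> powr (-1/2)"
    show "order c (char_poly_map (plane_op g (Rt g u v m) e1 e2)) = (if c = 0 then CARD('a) else 0)"
      unfolding plane_op_Rt[OF fr]
    proof (rule sqzero_order)
      show "linear (Fm g (?k *\<^sub>R phiv g u v m e1) (phiv g u v m e2))" by (rule linear_Fm[OF h])
      fix z
      show "Fm g (?k *\<^sub>R phiv g u v m e1) (phiv g u v m e2) (Fm g (?k *\<^sub>R phiv g u v m e1) (phiv g u v m e2) z) = 0"
        by (rule Fm_sq[OF h]) (simp_all add: sbf_simps[OF h] phiv_phiv[OF fr m])
    qed
  qed
  show ?thesis unfolding IP_def same_eigenvalues_def using sq by simp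
qed



lemma span2_repr:
  fixes e1 e2 :: "'a::real_vector"
  assumes "x \<in> span {e1, e2}"
  shows "\<exists>\<alpha> \<beta>. x = \<alpha> *\<^sub>R e1 + \<beta> *\<^sub>R e2"
proof -
  obtain k where "x - k *\<^sub>R e1 \<in> span {e2}" using assms span_breakdown_eq by blast
  then obtain t where "x - k *\<^sub>R e1 = t *\<^sub>R e2" by (auto simp: span_singleton)
  then show ?thesis by (metis diff_add_cancel add.commute)
qed

lemma span2_mem: "\<alpha> *\<^sub>R e1 + \<beta> *\<^sub>R e2 \<in> span {e1, e2}"
  by (intro span_add span_mul span_base) auto

lemma has_sig_neg: "has_signature (\<lambda>x y. - g x y) W a b \<longleftrightarrow> has_signature g W b a"
  unfolding has_signature_def neg_def_on_def pos_def_on_def nondeg_on_def by auto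

lemma dim_zero_set: "dim {0::'a::euclidean_space} = 0"
  using dim_eq_0 by blast

lemma orth_pair_facts:
  assumes h: "sbf g" and o: "g e1 e2 = 0" and s1: "g e1 e1 \<noteq> 0" and s2: "g e2 e2 \<noteq> 0"
  shows "\<And>\<alpha> \<beta>. \<alpha> *\<^sub>R e1 + \<beta> *\<^sub>R e2 = 0 \<Longrightarrow> \<alpha> = 0 \<and> \<beta> = 0"
    and "\<And>\<alpha> \<beta>. g (\<alpha> *\<^sub>R e1 + \<beta> *\<^sub>R e2) (\<alpha> *\<^sub>R e1 + \<beta> *\<^sub>R e2) = \<alpha>^2 * g e1 e1 + \<beta>^2 * g e2 e2"
    and "dim (span {e1, e2}) = 2" and "dim (span {e1}) = 1" and "dim (span {e2}) = 1"
    and "nondeg_on g (span {e1, e2})"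
proof -
  have o': "g e2 e1 = 0" using o sbf_sym[OF h] by metis
  show ind: "\<alpha> = 0 \<and> \<beta> = 0" if "\<alpha> *\<^sub>R e1 + \<beta> *\<^sub>R e2 = 0" for \<alpha> \<beta>
  proof -
    have "g (\<alpha> *\<^sub>R e1 + \<beta> *\<^sub>R e2) e1 = 0" "g (\<alpha> *\<^sub>R e1 + \<beta> *\<^sub>R e2) e2 = 0" using that h by (simp_all add: sbf_simps)
    then show ?thesis using o o' s1 s2 h by (simp add: sbf_simps)
  qed
  show "g (\<alpha> *\<^sub>R e1 + \<beta> *\<^sub>R e2) (\<alpha> *\<^sub>R e1 + \<beta> *\<^sub>R e2) = \<alpha>^2 * g e1 e1 + \<beta>^2 * g e2 e2" for \<alpha> \<beta>
    using o o' h by (simp add: sbf_simps power2_eq_square algebra_simps)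
  have e1: "e1 \<noteq> 0" and e2: "e2 \<noteq> 0" using s1 s2 h by (auto simp: sbf_simps)
  have "e1 \<notin> span {e2}"
  proof
    assume "e1 \<in> span {e2}"
    then obtain t where "e1 = t *\<^sub>R e2" by (auto simp: span_singleton)
    then have "1 *\<^sub>R e1 + (- t) *\<^sub>R e2 = 0" by simp
    then show False using ind by fastforce
  qed
  then show "dim (span {e1, e2}) = 2" using e2 by (simp add: dim_span dim_insert)
  show "dim (span {e1}) = 1" using e1 by (simp add: dim_span dim_insert)
  show "dim (span {e2}) = 1" using e2 by (simp add: dim_span dim_insert)
  show "nondeg_on g (span {e1, e2})" unfolding nondeg_on_def
  proof (intro ballI impI)
    fix x assume x: "x \<in> span {e1, e2}" "\<forall>y\<in>span {e1, e2}. g x y = 0"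
    then obtain \<alpha> \<beta> where xe: "x = \<alpha> *\<^sub>R e1 + \<beta> *\<^sub>R e2" using span2_repr by blast
    have "g x e1 = 0" "g x e2 = 0" using x(2) by (auto intro: span_base)
    then have "\<alpha> = 0" "\<beta> = 0" using xe o o' s1 s2 h by (simp_all add: sbf_simps)
    then show "x = 0" using xe by simp
  qed
qed

lemma fill_plane:
  fixes e1 e2 :: "real^'n"
  assumes "subspace U" "U \<subseteq> span {e1, e2}" "dim (span {e1, e2}) = 2" "dim U \<ge> 2"
  shows "span {e1, e2} \<subseteq> U"
proof -
  have "span U = span (span {e1, e2})" using dim_eq_span[OF assms(2)] assms(3,4) by simp
  then show ?thesis using assms(1) by (simp add: span_eq_iff[THEN iffD2])
qed

lemma spacelike_orth:
  assumes h: "sbf g" and o: "g e1 e2 = 0" and s1: "g e1 e1 = 1" and s2: "g e2 e2 = 1"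
  shows "plane_of_sig g 0 2 e1 e2"
proof -
  note F = orth_pair_facts[OF h o, unfolded s1 s2]
  have pd: "pos_def_on g (span {e1, e2})" unfolding pos_def_on_def
  proof (intro ballI impI)
    fix x assume "x \<in> span {e1, e2}" "x \<noteq> 0"
    then obtain \<alpha> \<beta> where xe: "x = \<alpha> *\<^sub>R e1 + \<beta> *\<^sub>R e2" using span2_repr by blast
    then have "\<not> (\<alpha> = 0 \<and> \<beta> = 0)" using \<open>x \<noteq> 0\<close> by auto
    then have "\<alpha>^2 + \<beta>^2 > 0" by (simp add: sum_power2_gt_zero_iff)
    then show "g x x > 0" using xe F(2) by simp
  qed
  have "has_signature g (span {e1, e2}) 0 2" unfolding has_signature_def
  proof (intro conjI)
    show "subspace (span {e1, e2})" by (rule subspace_span)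
    show "nondeg_on g (span {e1, e2})" using F by simp
    show "\<exists>U. subspace U \<and> U \<subseteq> span {e1, e2} \<and> neg_def_on g U \<and> dim U = 0"
      by (rule exI[of _ "{0}"]) (auto simp: subspace_def neg_def_on_def span_zero dim_zero_set)
    show "\<forall>U. subspace U \<and> U \<subseteq> span {e1, e2} \<and> neg_def_on g U \<longrightarrow> dim U \<le> 0"
    proof (intro allI impI)
      fix U assume U: "subspace U \<and> U \<subseteq> span {e1, e2} \<and> neg_def_on g U"
      have "U \<subseteq> {0}"
      proof
        fix x assume "x \<in> U"
        show "x \<in> {0}"
        proof (rule ccontr)
          assume "x \<notin> {0}"
          then have "g x x < 0" "g x x > 0" using U \<open>x \<in> U\<close> pd unfolding neg_def_on_def pos_def_on_def by auto
          then show False by simp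
        qed
      qed
      then show "dim U \<le> 0" using dim_eq_0 by simp
    qed
    show "\<exists>U. subspace U \<and> U \<subseteq> span {e1, e2} \<and> pos_def_on g U \<and> dim U = 2"
      using pd F by (intro exI[of _ "span {e1, e2}"]) (auto simp: subspace_span)
    show "\<forall>U. subspace U \<and> U \<subseteq> span {e1, e2} \<and> pos_def_on g U \<longrightarrow> dim U \<le> 2"
      using F(3) dim_subset[of _ "span {e1, e2}"] by auto
  qed
  then show ?thesis unfolding plane_of_sig_def using F by simp
qed

lemma timelike_orth:
  assumes h: "sbf g" and o: "g e1 e2 = 0" and s1: "g e1 e1 = -1" and s2: "g e2 e2 = -1"
  shows "plane_of_sig g 2 0 e1 e2"
proof -
  have "plane_of_sig (\<lambda>x y. - g x y) 0 2 e1 e2"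
    by (rule spacelike_orth[OF sbf_neg[OF h]]) (use o s1 s2 in auto)
  then show ?thesis unfolding plane_of_sig_def has_sig_neg by simp
qed

lemma mixed_orth:
  assumes h: "sbf g" and o: "g e1 e2 = 0" and s1: "g e1 e1 = -1" and s2: "g e2 e2 = 1"
  shows "plane_of_sig g 1 1 e1 e2"
proof -
  note F = orth_pair_facts[OF h o, unfolded s1 s2]
  have e1: "e1 \<noteq> 0" and e2: "e2 \<noteq> 0" using s1 s2 h by (auto simp: sbf_simps)
  have sub1: "span {e1} \<subseteq> span {e1, e2}" "span {e2} \<subseteq> span {e1, e2}" by (simp_all add: span_mono)
  have "has_signature g (span {e1, e2}) 1 1" unfolding has_signature_def
  proof (intro conjI)
    show "subspace (span {e1, e2})" by (rule subspace_span)
    show "nondeg_on g (span {e1, e2})" using F by simp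
    show "\<exists>U. subspace U \<and> U \<subseteq> span {e1, e2} \<and> neg_def_on g U \<and> dim U = 1"
    proof (intro exI[of _ "span {e1}"] conjI)
      show "neg_def_on g (span {e1})" unfolding neg_def_on_def
        using s1 h by (auto simp: span_singleton sbf_simps zero_less_mult_iff)
    qed (use sub1 F in \<open>auto simp: subspace_span\<close>)
    show "\<exists>U. subspace U \<and> U \<subseteq> span {e1, e2} \<and> pos_def_on g U \<and> dim U = 1"
    proof (intro exI[of _ "span {e2}"] conjI)
      show "pos_def_on g (span {e2})" unfolding pos_def_on_def
        using s2 h by (auto simp: span_singleton sbf_simps zero_less_mult_iff)
    qed (use sub1 F in \<open>auto simp: subspace_span\<close>)
    show "\<forall>U. subspace U \<and> U \<subseteq> span {e1, e2} \<and> neg_def_on g U \<longrightarrow> dim U \<le> 1"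
    proof (intro allI impI)
      fix U assume U: "subspace U \<and> U \<subseteq> span {e1, e2} \<and> neg_def_on g U"
      show "dim U \<le> 1"
      proof (rule ccontr)
        assume "\<not> dim U \<le> 1"
        then have "span {e1, e2} \<subseteq> U" using fill_plane[of U e1 e2] U F by simp
        then have "e2 \<in> U" by (auto intro: span_base)
        then show False using U e2 s2 unfolding neg_def_on_def by force
      qed
    qed
    show "\<forall>U. subspace U \<and> U \<subseteq> span {e1, e2} \<and> pos_def_on g U \<longrightarrow> dim U \<le> 1"
    proof (intro allI impI)
      fix U assume U: "subspace U \<and> U \<subseteq> span {e1, e2} \<and> pos_def_on g U"
      show "dim U \<le> 1"
      proof (rule ccontr)
        assume "\<not> dim U \<le> 1"
        then have "span {e1, e2} \<subseteq> U" using fill_plane[of U e1 e2] U F by simp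
        then have "e1 \<in> U" by (auto intro: span_base)
        then show False using U e1 s1 unfolding pos_def_on_def by force
      qed
    qed
  qed
  then show ?thesis unfolding plane_of_sig_def using F by simp
qed

lemma not_jordan:
  fixes g :: "('n::finite) form"
  assumes "plane_of_sig g a b e1 e2" "plane_of_sig g a b f1 f2"
    "plane_op g R e1 e2 = (\<lambda>z. 0)" "plane_op g R f1 f2 z \<noteq> 0"
  shows "\<not> jordan_IP_sig a b g R"
proof
  assume "jordan_IP_sig a b g R"
  then have "conjugate_maps (\<lambda>z. 0) (plane_op g R f1 f2)"
    using assms(1,2,3) unfolding jordan_IP_sig_def by metis
  then obtain T where T: "linear T" "bij T" "T \<circ> (\<lambda>z::real^'n. 0) = plane_op g R f1 f2 \<circ> T"
    unfolding conjugate_maps_def by blast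
  obtain y where "T y = z" using T(2) by (metis bij_pointE)
  have "plane_op g R f1 f2 (T y) = T 0" using fun_cong[OF T(3), of y] by simp
  then show False using assms(4) \<open>T y = z\<close> linear_0[OF T(1)] by simp
qed

lemma plane_op_orth:
  assumes fr: "frame g p q u v" and "g e1 e2 = 0" "\<bar>g e1 e1\<bar> = 1" "\<bar>g e2 e2\<bar> = 1"
  shows "plane_op g (Rt g u v m) e1 e2 = Fm g (phiv g u v m e1) (phiv g u v m e2)"
proof -
  have "\<bar>g e1 e1 * g e2 e2 - (g e1 e2)^2\<bar> = 1" using assms(2-4) by (simp add: abs_mult)
  then show ?thesis unfolding plane_op_Rt[OF fr] by simp
qed



definition indep2 :: "real^'n \<Rightarrow> real^'n \<Rightarrow> bool" where
  "indep2 a b \<longleftrightarrow> (\<forall>\<alpha> \<beta>. \<alpha> *\<^sub>R a + \<beta> *\<^sub>R b = 0 \<longrightarrow> \<alpha> = 0 \<and> \<beta> = 0)"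

lemma indep2_sym: "indep2 a b \<Longrightarrow> indep2 b a"
  unfolding indep2_def by (metis add.commute)

lemma dual_vec:
  fixes g :: "('n::finite) form"
  assumes h: "sbf g" and nd: "\<And>x. (\<And>y. g x y = 0) \<Longrightarrow> x = 0" and ind: "indep2 a b"
  shows "\<exists>c. g a c = 1 \<and> g b c = 0"
proof (rule ccontr)
  assume nc: "\<not> (\<exists>c. g a c = 1 \<and> g b c = 0)"
  have b0: "b \<noteq> 0" using ind unfolding indep2_def by (metis add_0 one_neq_zero scale_zero_left scale_zero_right)
  obtain w where w: "g b w \<noteq> 0" using nd b0 by blast
  define w1 where "w1 = (1 / g b w) *\<^sub>R w"
  have w1: "g b w1 = 1" using w h by (simp add: w1_def sbf_simps)
  have ker: "g a z = 0" if "g b z = 0" for z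
  proof (rule ccontr)
    assume "g a z \<noteq> 0"
    then have "g a ((1 / g a z) *\<^sub>R z) = 1 \<and> g b ((1 / g a z) *\<^sub>R z) = 0" using that h by (simp add: sbf_simps)
    then show False using nc by blast
  qed
  have "g (a - g a w1 *\<^sub>R b) z = 0" for z
  proof -
    have "g b (z - g b z *\<^sub>R w1) = 0" using w1 h by (simp add: sbf_simps)
    then have "g a (z - g b z *\<^sub>R w1) = 0" by (rule ker)
    then have "g a z = g b z * g a w1" using h by (simp add: sbf_simps)
    then show ?thesis using h by (simp add: sbf_simps sbf_sym[OF h, of b z])
  qed
  then have "a - g a w1 *\<^sub>R b = 0" using nd by blast
  then have "1 *\<^sub>R a + (- g a w1) *\<^sub>R b = 0" by simp
  then show False using ind unfolding indep2_def by (metis one_neq_zero)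
qed

lemma indep2_set:
  assumes "indep2 a b"
  shows "independent {a, b}" "a \<noteq> b" "a \<noteq> 0" "b \<noteq> 0"
proof -
  show ab: "a \<noteq> b"
  proof
    assume "a = b"
    then have "1 *\<^sub>R a + (-1) *\<^sub>R b = 0" by simp
    then show False using assms unfolding indep2_def by fastforce
  qed
  show b0: "b \<noteq> 0" using assms unfolding indep2_def by (metis add_0 one_neq_zero scale_zero_left scale_zero_right)
  show a0: "a \<noteq> 0" using assms unfolding indep2_def by (metis add_0_right one_neq_zero scale_zero_left scale_zero_right)
  have "a \<notin> span {b}"
  proof
    assume "a \<in> span {b}"
    then obtain t where "a = t *\<^sub>R b" by (auto simp: span_singleton)
    then have "1 *\<^sub>R a + (- t) *\<^sub>R b = 0" by simp
    then show False using assms unfolding indep2_def by fastforce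
  qed
  then show "independent {a, b}" using b0 ab by (simp add: independent_insert)
qed

lemma basis_setup:
  fixes g :: "('n::finite) form"
  assumes h: "sbf g" and ind: "indep2 a b" and iso: "g a a = 0" "g b b = 0" "g a b = 0"
    and c: "g a c = 1" "g b c = 0" and d: "g a d = 0" "g b d = 1"
  obtains BK where "{a, b} \<subseteq> BK" "\<forall>x\<in>BK. g a x = 0 \<and> g b x = 0"
    "independent (insert c (insert d BK))" "span (insert c (insert d BK)) = UNIV"
    "c \<notin> BK" "d \<notin> BK" "c \<noteq> d" "finite BK" "card BK + 2 = CARD('n)"
proof -
  define K where "K = {z. g a z = 0 \<and> g b z = 0}"
  have subK: "subspace K" unfolding K_def subspace_def using h by (auto simp: sbf_simps)
  have abK: "{a, b} \<subseteq> K" unfolding K_def using iso sbf_sym[OF h, of b a] by auto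
  obtain BK where BK: "{a, b} \<subseteq> BK" "BK \<subseteq> K" "independent BK" "K \<subseteq> span BK"
    using maximal_independent_subset_extend[OF abK indep2_set(1)[OF ind]] by blast
  have spK: "span BK \<subseteq> K" using span_minimal[OF BK(2) subK] .
  have cK: "c \<notin> K" and dK: "d \<notin> K" using c d by (auto simp: K_def)
  have cd: "c \<noteq> d" using c d by auto
  have dsp: "d \<notin> span BK" using spK dK by auto
  have csp: "c \<notin> span (insert d BK)"
  proof -
    have "subspace {z. g a z = 0}" unfolding subspace_def using h by (auto simp: sbf_simps)
    moreover have "insert d BK \<subseteq> {z. g a z = 0}" using d BK(2) by (auto simp: K_def)
    ultimately have "span (insert d BK) \<subseteq> {z. g a z = 0}" by (rule span_minimal[rotated])
    then show ?thesis using c by auto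
  qed
  have indB: "independent (insert c (insert d BK))"
    using BK(3) dsp csp by (simp add: independent_insert)
  have spB: "span (insert c (insert d BK)) = UNIV"
  proof -
    have "z \<in> span (insert c (insert d BK))" for z
    proof -
      have "z - g a z *\<^sub>R c - g b z *\<^sub>R d \<in> K" using c d h by (simp add: K_def sbf_simps)
      then have 1: "z - g a z *\<^sub>R c - g b z *\<^sub>R d \<in> span (insert c (insert d BK))"
        using BK(4) span_mono[of BK "insert c (insert d BK)"] by auto
      have 2: "g a z *\<^sub>R c + g b z *\<^sub>R d \<in> span (insert c (insert d BK))"
        by (intro span_add span_mul span_base) auto
      have "z = (z - g a z *\<^sub>R c - g b z *\<^sub>R d) + (g a z *\<^sub>R c + g b z *\<^sub>R d)" by simp
      then show ?thesis using span_add[OF 1 2] by metis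
    qed
    then show ?thesis by auto
  qed
  have finB: "finite (insert c (insert d BK))" using indB by (rule independent_imp_finite)
  then have finBK: "finite BK" by simp
  have "card (insert c (insert d BK)) = dim (insert c (insert d BK))"
    using dim_eq_card_independent[OF indB] by simp
  also have "\<dots> = dim (UNIV :: (real^'n) set)" using spB by (metis dim_span)
  also have "\<dots> = CARD('n)" by simp
  moreover have "c \<notin> BK" "d \<notin> BK" using cK dK BK(2) by auto
  ultimately have "card BK + 2 = CARD('n)"
    using finBK cd by (simp add: card_insert_if)
  then show ?thesis using that BK(1) BK(2) indB spB cK dK cd finBK unfolding K_def by blast
qed



lemma conj_Fm:
  fixes g :: "('n::finite) form"
  assumes h: "sbf g" and nd: "\<And>x. (\<And>y. g x y = 0) \<Longrightarrow> x = 0"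
    and ind: "indep2 a b" and iso: "g a a = 0" "g b b = 0" "g a b = 0"
    and ind': "indep2 a' b'" and iso': "g a' a' = 0" "g b' b' = 0" "g a' b'= 0"
  shows "conjugate_maps (Fm g a b) (Fm g a' b')"
proof -
  obtain c where c: "g a c = 1" "g b c = 0" using dual_vec[OF h nd ind] by blast
  obtain d where d: "g b d = 1" "g a d = 0" using dual_vec[OF h nd indep2_sym[OF ind]] by blast
  obtain c' where c': "g a' c' = 1" "g b' c' = 0" using dual_vec[OF h nd ind'] by blast
  obtain d' where d': "g b' d' = 1" "g a' d' = 0" using dual_vec[OF h nd indep2_sym[OF ind']] by blast
  obtain BK where BK: "{a, b} \<subseteq> BK" "\<forall>x\<in>BK. g a x = 0 \<and> g b x = 0"
    "independent (insert c (insert d BK))" "span (insert c (insert d BK)) = UNIV"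
    "c \<notin> BK" "d \<notin> BK" "c \<noteq> d" "finite BK" "card BK + 2 = CARD('n)"
    using basis_setup[OF h ind iso c d(2,1)] by blast
  obtain BK' where BK': "{a', b'} \<subseteq> BK'" "\<forall>x\<in>BK'. g a' x = 0 \<and> g b' x = 0"
    "independent (insert c' (insert d' BK'))" "span (insert c' (insert d' BK')) = UNIV"
    "c' \<notin> BK'" "d' \<notin> BK'" "c' \<noteq> d'" "finite BK'" "card BK' + 2 = CARD('n)"
    using basis_setup[OF h ind' iso' c' d'(2,1)] by blast
  have ab: "a \<noteq> b" and ab': "a' \<noteq> b'" using indep2_set ind ind' by auto
  have "card (BK - {a, b}) = card (BK' - {a', b'})"
    using BK(1,8,9) BK'(1,8,9) ab ab' by (simp add: card_Diff_subset)
  then obtain \<sigma> where \<sigma>: "bij_betw \<sigma> (BK - {a, b}) (BK' - {a', b'})"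
    using finite_same_card_bij BK(8) BK'(8) by (meson finite_Diff)
  define \<tau> where "\<tau> x = (if x = a then a' else if x = b then b' else if x = c then c' else if x = d then d' else \<sigma> x)" for x
  obtain T where T: "linear T" "\<forall>x\<in>insert c (insert d BK). T x = \<tau> x"
    using linear_independent_extend[OF BK(3)] by blast
  have ca: "c \<noteq> a" "c \<noteq> b" "d \<noteq> a" "d \<noteq> b"
    using c d iso sbf_sym[OF h, of b a] by auto
  have Ta: "T a = a'" and Tb: "T b = b'" and Tc: "T c = c'" and Td: "T d = d'"
    using T(2) BK(1,7) ca ab by (auto simp: \<tau>_def)
  have Tx: "T x = \<sigma> x" if "x \<in> BK - {a, b}" for x
    using T(2) that BK(5,6) by (auto simp: \<tau>_def)
  have surjT: "surj T"
  proof -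
    have "insert c' (insert d' BK') \<subseteq> T ` insert c (insert d BK)"
    proof
      fix y assume y: "y \<in> insert c' (insert d' BK')"
      show "y \<in> T ` insert c (insert d BK)"
      proof (cases "y \<in> BK' - {a', b'}")
        case True
        then obtain x where "x \<in> BK - {a, b}" "y = \<sigma> x" using \<sigma> by (metis bij_betw_imp_surj_on imageE)
        then show ?thesis using Tx by force
      next
        case False
        then have "y = a' \<or> y = b' \<or> y = c' \<or> y = d'" using y by auto
        then show ?thesis using Ta Tb Tc Td BK(1) by force
      qed
    qed
    then have "span (insert c' (insert d' BK')) \<subseteq> span (T ` insert c (insert d BK))" by (rule span_mono)
    also have "\<dots> = T ` span (insert c (insert d BK))" by (rule span_linear_image[OF T(1)])
    finally show ?thesis using BK'(4) by auto
  qed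
  have injT: "inj T" using linear_surjective_imp_injective[OF T(1) surjT] by simp
  have bijT: "bij T" using injT surjT by (simp add: bij_def)
  have key: "g a' (T z) = g a z \<and> g b' (T z) = g b z" for z
  proof -
    have lin1: "linear (\<lambda>z. g a' (T z))" "linear (\<lambda>z. g b' (T z))"
      using linear_compose[OF T(1) sbf_linr[OF h]] by (auto simp: o_def)
    have lin2: "linear (\<lambda>z. g a z)" "linear (\<lambda>z. g b z)" using sbf_linr[OF h] by auto
    have onB: "g a' (T x) = g a x \<and> g b' (T x) = g b x" if x: "x \<in> insert c (insert d BK)" for x
    proof -
      consider "x = c" | "x = d" | "x = a" | "x = b" | "x \<in> BK - {a, b}" using x by auto
      then show ?thesis
      proof cases
        case 1 then show ?thesis using Tc c c' by simp
      next
        case 2 then show ?thesis using Td d d' by simp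
      next
        case 3 then show ?thesis using Ta iso iso' sbf_sym[OF h, of b a] sbf_sym[OF h, of b' a'] by simp
      next
        case 4 then show ?thesis using Tb iso iso' by simp
      next
        case 5
        then have "\<sigma> x \<in> BK' - {a', b'}" using \<sigma> by (metis bij_betw_apply)
        then show ?thesis using 5 Tx BK(2) BK'(2) by auto
      qed
    qed
    have "z \<in> span (insert c (insert d BK))" using BK(4) by auto
    then show ?thesis
      using linear_eq_on_span[OF lin1(1) lin2(1), of "insert c (insert d BK)" z]
        linear_eq_on_span[OF lin1(2) lin2(2), of "insert c (insert d BK)" z] onB by blast
  qed
  have "T \<circ> Fm g a b = Fm g a' b' \<circ> T"
  proof
    fix z
    show "(T \<circ> Fm g a b) z = (Fm g a' b' \<circ> T) z"
      using key[of z] Ta Tb linear_diff[OF T(1)] linear_scale[OF T(1)] by (simp add: Fm_def)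
  qed
  then show ?thesis unfolding conjugate_maps_def using T(1) bijT by blast
qed



lemma def_plane:
  fixes g :: "('n::finite) form"
  assumes "plane_of_sig g 0 2 e1 e2"
  shows "pos_def_on g (span {e1, e2})"
proof -
  obtain U where U: "subspace U" "U \<subseteq> span {e1, e2}" "pos_def_on g U" "dim U = 2"
    using assms unfolding plane_of_sig_def has_signature_def by blast
  have "dim (span {e1, e2}) \<le> card {e1, e2}" by (rule dim_le_card) auto
  also have "\<dots> \<le> 2" by (simp add: card_insert_if)
  finally have "span U = span (span {e1, e2})" using dim_eq_span[OF U(2)] U(4) by simp
  then have "span {e1, e2} \<subseteq> U" using U(1) by (simp add: span_eq_iff[THEN iffD2])
  then show ?thesis using U(3) unfolding pos_def_on_def by blast
qed

lemma def_plane_neg: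
  fixes g :: "('n::finite) form"
  assumes "plane_of_sig g 2 0 e1 e2"
  shows "neg_def_on g (span {e1, e2})"
proof -
  have "plane_of_sig (\<lambda>x y. - g x y) 0 2 e1 e2" using assms unfolding plane_of_sig_def has_sig_neg by simp
  then show ?thesis using def_plane neg_pos_def by blast
qed

lemma gram_nonzero:
  assumes h: "sbf g" and ind: "indep2 e1 e2" and D: "\<forall>x\<in>span {e1, e2}. x \<noteq> 0 \<longrightarrow> g x x \<noteq> 0"
  shows "g e1 e1 * g e2 e2 - (g e1 e2)^2 \<noteq> 0"
proof
  assume G: "g e1 e1 * g e2 e2 - (g e1 e2)^2 = 0"
  have e2: "e2 \<noteq> 0" using indep2_set[OF ind] by simp
  have g22: "g e2 e2 \<noteq> 0" using D e2 by (auto intro: span_base)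
  define x where "x = g e2 e2 *\<^sub>R e1 + (- g e1 e2) *\<^sub>R e2"
  have x0: "x \<noteq> 0" using ind g22 unfolding x_def indep2_def by blast
  have "g x x = g e2 e2 * (g e1 e1 * g e2 e2 - (g e1 e2)^2)"
    unfolding x_def using h by (simp add: sbf_simps sbf_sym[OF h, of e2 e1] power2_eq_square algebra_simps)
  then have "g x x = 0" using G by simp
  moreover have "x \<in> span {e1, e2}" unfolding x_def by (rule span2_mem)
  ultimately show False using D x0 by blast
qed

lemma jordan_sig:
  fixes g :: "('n::finite) form"
  assumes fr: "frame g p q u v" and m: "m \<le> p" "m \<le> q"
    and H: "\<And>e1 e2. plane_of_sig g a b e1 e2 \<Longrightarrow>
       (\<forall>x\<in>span {e1, e2}. x \<noteq> 0 \<longrightarrow> g x x \<noteq> 0 \<and> phiv g u v m x \<noteq> 0)"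
  shows "jordan_IP_sig a b g (Rt g u v m)"
proof -
  have h: "sbf g" using frame_sbf[OF fr] .
  have nd: "\<And>x. (\<And>y. g x y = 0) \<Longrightarrow> x = 0" using frame_nd[OF fr] by blast
  have lp: "linear (phiv g u v m)" by (rule linear_phiv[OF h])
  have P: "\<exists>k. plane_op g (Rt g u v m) e1 e2 = Fm g (k *\<^sub>R phiv g u v m e1) (phiv g u v m e2)
     \<and> indep2 (k *\<^sub>R phiv g u v m e1) (phiv g u v m e2)"
    if pl: "plane_of_sig g a b e1 e2" for e1 e2
  proof -
    have ind: "indep2 e1 e2" using pl unfolding plane_of_sig_def indep2_def by blast
    have D: "\<forall>x\<in>span {e1, e2}. x \<noteq> 0 \<longrightarrow> g x x \<noteq> 0 \<and> phiv g u v m x \<noteq> 0" using H[OF pl] .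
    define k where "k = \<bar>g e1 e1 * g e2 e2 - (g e1 e2)^2\<bar> powr (-1/2)"
    have k0: "k \<noteq> 0" unfolding k_def using gram_nonzero[OF h ind] D by simp
    have "indep2 (k *\<^sub>R phiv g u v m e1) (phiv g u v m e2)" unfolding indep2_def
    proof (intro allI impI)
      fix \<alpha> \<beta> assume "\<alpha> *\<^sub>R k *\<^sub>R phiv g u v m e1 + \<beta> *\<^sub>R phiv g u v m e2 = 0"
      then have "phiv g u v m ((\<alpha> * k) *\<^sub>R e1 + \<beta> *\<^sub>R e2) = 0"
        using linear_add[OF lp] linear_scale[OF lp] by simp
      moreover have "(\<alpha> * k) *\<^sub>R e1 + \<beta> *\<^sub>R e2 \<in> span {e1, e2}" by (rule span2_mem)
      ultimately have "(\<alpha> * k) *\<^sub>R e1 + \<beta> *\<^sub>R e2 = 0" using D by blast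
      then have "\<alpha> * k = 0 \<and> \<beta> = 0" using ind unfolding indep2_def by blast
      then show "\<alpha> = 0 \<and> \<beta> = 0" using k0 by simp
    qed
    then show ?thesis using plane_op_Rt[OF fr, of m e1 e2] unfolding k_def by blast
  qed
  show ?thesis unfolding jordan_IP_sig_def
  proof (intro allI impI)
    fix e1 e2 f1 f2 assume pl: "plane_of_sig g a b e1 e2 \<and> plane_of_sig g a b f1 f2"
    obtain k where k: "plane_op g (Rt g u v m) e1 e2 = Fm g (k *\<^sub>R phiv g u v m e1) (phiv g u v m e2)"
      "indep2 (k *\<^sub>R phiv g u v m e1) (phiv g u v m e2)" using P pl by blast
    obtain k' where k': "plane_op g (Rt g u v m) f1 f2 = Fm g (k' *\<^sub>R phiv g u v m f1) (phiv g u v m f2)"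
      "indep2 (k' *\<^sub>R phiv g u v m f1) (phiv g u v m f2)" using P pl by blast
    show "conjugate_maps (plane_op g (Rt g u v m) e1 e2) (plane_op g (Rt g u v m) f1 f2)"
      unfolding k(1) k'(1)
      by (rule conj_Fm[OF h nd k(2) _ _ _ k'(2)])
         (simp_all add: sbf_simps[OF h] phiv_phiv[OF fr m])
  qed
qed



lemma ker_pos:
  fixes g :: "('n::finite) form"
  assumes ips: "inner_product_sig g p q" and fr: "frame g p q u v" and qp: "q \<le> p"
    and ph: "phiv g u v q x = 0"
  shows "g x x \<le> 0"
proof (rule ccontr)
  assume "\<not> g x x \<le> 0"
  then have gx: "g x x > 0" by simp
  have h: "sbf g" using frame_sbf[OF fr] .
  have bound: "\<And>U. subspace U \<Longrightarrow> pos_def_on g U \<Longrightarrow> dim U \<le> q"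
    using ips unfolding inner_product_sig_def has_signature_def by blast
  note nv = n_v[OF fr qp order.refl]
  note nn = n_n[OF fr qp order.refl]
  have nvs: "g (v j) (u i + v i) = (if i = j then 1 else 0)" if "i < q" "j < q" for i j
    using nv[OF that] sbf_sym[OF h] by metis
  have gxn: "g x (u j + v j) = 0" if j: "j < q" for j
  proof -
    have "0 = g (phiv g u v q x) (v j)" using ph h by (simp add: sbf_simps)
    also have "\<dots> = (\<Sum>i<q. g x (u i + v i) * g (v j) (u i + v i))" by (simp add: phiv_g[OF h] Bf_def)
    also have "\<dots> = (\<Sum>i<q. if i = j then g x (u j + v j) else 0)"
      by (rule sum.cong) (auto simp: nvs j)
    also have "\<dots> = g x (u j + v j)" using j by simp
    finally show ?thesis by simp
  qed
  have gnx: "g (u j + v j) x = 0" if "j < q" for j using gxn[OF that] sbf_sym[OF h] by metis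
  define x2 where "x2 = x - (\<Sum>i<q. g x (v i) *\<^sub>R (u i + v i))"
  have x2n: "g x2 (u j + v j) = 0" if j: "j < q" for j
  proof -
    have "g x2 (u j + v j) = g x (u j + v j) - (\<Sum>i<q. g x (v i) * g (u i + v i) (u j + v j))"
      unfolding x2_def by (simp only: sbf_simps(3,11,5)[OF h])
    also have "\<dots> = 0" using gxn[OF j] nn j by simp
    finally show ?thesis .
  qed
  have x2v: "g x2 (v j) = 0" if j: "j < q" for j
  proof -
    have "g x2 (v j) = g x (v j) - (\<Sum>i<q. g x (v i) * g (u i + v i) (v j))"
      unfolding x2_def by (simp only: sbf_simps(3,11,5)[OF h])
    also have "(\<Sum>i<q. g x (v i) * g (u i + v i) (v j)) = (\<Sum>i<q. if i = j then g x (v j) else 0)"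
      by (rule sum.cong) (auto simp: nv j)
    also have "\<dots> = g x (v j)" using j by simp
    finally show ?thesis by simp
  qed
  have x2x2: "g x2 x2 = g x x"
  proof -
    have "g x2 x2 = g x2 x - (\<Sum>i<q. g x (v i) * g x2 (u i + v i))"
      by (subst (2) x2_def) (simp only: sbf_simps(4,12,6)[OF h])
    also have "(\<Sum>i<q. g x (v i) * g x2 (u i + v i)) = 0" using x2n by simp
    also have "g x2 x = g x x - (\<Sum>i<q. g x (v i) * g (u i + v i) x)"
      unfolding x2_def by (simp only: sbf_simps(3,11,5)[OF h])
    also have "(\<Sum>i<q. g x (v i) * g (u i + v i) x) = 0" using gnx by simp
    finally show ?thesis by simp
  qed
  define w where "w = v(q := x2)"
  have ow: "orthfam g w (Suc q)" unfolding orthfam_def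
  proof (intro allI impI)
    fix i j assume ij: "i < Suc q" "j < Suc q" "i \<noteq> j"
    show "g (w i) (w j) = 0"
    proof (cases "i = q")
      case True
      then show ?thesis using ij x2v by (auto simp: w_def)
    next
      case False
      note iF = False
      show ?thesis
      proof (cases "j = q")
        case True
        then have "g (w j) (w i) = 0" using ij iF x2v by (auto simp: w_def)
        then show ?thesis using sbf_sym[OF h] by metis
      next
        case False
        then show ?thesis using iF ij frame_vals(4)[OF fr] by (auto simp: w_def)
      qed
    qed
  qed
  have pw: "g (w i) (w i) > 0" if "i < Suc q" for i
    using that frame_vals(2)[OF fr] x2x2 gx by (auto simp: w_def less_Suc_eq)
  have "dim (span (w ` {..<Suc q})) \<le> q"
    by (rule bound[OF subspace_span orthfam_posdef[OF h ow pw]])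
  then show False using orthfam_dim[OF h ow pw] by simp
qed

lemma ips_neg: "inner_product_sig g p q \<Longrightarrow> inner_product_sig (\<lambda>x y. - g x y) q p"
  unfolding inner_product_sig_def has_sig_neg
  using sbf_neg[of g] unfolding sbf_def by auto

lemma frame_neg: "frame g p q u v \<Longrightarrow> frame (\<lambda>x y. - g x y) q p v u"
  unfolding frame_def orthfam_def using sbf_neg[of g] sbf_sym[of g]
  by auto

lemma phiv_neg: "phiv (\<lambda>x y. - g x y) v u m x = - phiv g u v m x"
  unfolding phiv_def by (simp add: add.commute sum_negf)

lemma ker_neg:
  fixes g :: "('n::finite) form"
  assumes ips: "inner_product_sig g p q" and fr: "frame g p q u v" and pq: "p \<le> q"
    and ph: "phiv g u v p x = 0"
  shows "g x x \<ge> 0"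
proof -
  have "phiv (\<lambda>x y. - g x y) v u p x = 0" using ph phiv_neg[of g v u p x] by simp
  then have "- g x x \<le> 0" using ker_pos[OF ips_neg[OF ips] frame_neg[OF fr] pq] by blast
  then show ?thesis by simp
qed

lemma phi_v:
  assumes fr: "frame g p q u v" "m \<le> p" "m \<le> q" "j < q"
  shows "phiv g u v m (v j) = (if j < m then u j + v j else 0)"
proof -
  have h: "sbf g" using frame_sbf[OF fr(1)] .
  have "phiv g u v m (v j) = (\<Sum>i<m. (if i = j then u j + v j else 0))"
    unfolding phiv_def
    by (rule sum.cong) (use n_v[OF fr(1-3) _ fr(4)] sbf_sym[OF h, of "v j"] in auto)
  then show ?thesis by simp
qed

lemma phi_u:
  assumes fr: "frame g p q u v" "m \<le> p" "m \<le> q" "j < p"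
  shows "phiv g u v m (u j) = (if j < m then (-1) *\<^sub>R (u j + v j) else 0)"
proof -
  have h: "sbf g" using frame_sbf[OF fr(1)] .
  have "phiv g u v m (u j) = (\<Sum>i<m. (if i = j then (-1) *\<^sub>R (u j + v j) else 0))"
    unfolding phiv_def
    by (rule sum.cong) (use n_u[OF fr(1-3) _ fr(4)] sbf_sym[OF h, of "u j"] in auto)
  then show ?thesis by simp
qed

lemma Fm_nonzero:
  assumes fr: "frame g p q u v" "m \<le> p" "m \<le> q" "i < m" "j < m" "i \<noteq> j" "s \<noteq> 0" "t \<noteq> 0"
  shows "Fm g (s *\<^sub>R (u i + v i)) (t *\<^sub>R (u j + v j)) (v j) \<noteq> 0"
proof -
  have h: "sbf g" using frame_sbf[OF fr(1)] .
  have jq: "j < q" using fr by simp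
  have "Fm g (s *\<^sub>R (u i + v i)) (t *\<^sub>R (u j + v j)) (v j) = (t * s) *\<^sub>R (u i + v i)"
    using n_v[OF fr(1-3) fr(5) jq] n_v[OF fr(1-3) fr(4) jq] fr(6) h by (simp add: Fm_def sbf_simps)
  moreover have "u i + v i \<noteq> 0"
  proof
    assume "u i + v i = 0"
    then have "g (u i + v i) (v i) = 0" using h by (simp add: sbf_simps)
    moreover have "g (u i + v i) (v i) = 1" using n_v[OF fr(1-3) fr(4), of i] fr by simp
    ultimately show False by simp
  qed
  ultimately show ?thesis using fr(7,8) by simp
qed

lemma Fm_zero1: "sbf g \<Longrightarrow> Fm g a 0 = (\<lambda>z. 0)" by (rule ext) (simp add: Fm_def sbf_simps)
lemma Fm_zero2: "sbf g \<Longrightarrow> Fm g 0 b = (\<lambda>z. 0)" by (rule ext) (simp add: Fm_def sbf_simps)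



theorem lemma2p5:
  fixes g :: "real^'n \<Rightarrow> real^'n \<Rightarrow> real" and p q :: nat
  assumes "inner_product_sig g p q" and "p \<ge> 3" and "q \<ge> 3"
  shows "(\<exists>R. alg_curv_tensor R \<and> IP g R \<and> \<not> spacelike_jordan_IP g R
              \<and> \<not> timelike_jordan_IP g R \<and> \<not> mixed_jordan_IP g R)
       \<and> (p = q \<longrightarrow> (\<exists>R. alg_curv_tensor R \<and> spacelike_jordan_IP g R
              \<and> timelike_jordan_IP g R \<and> \<not> mixed_jordan_IP g R))
       \<and> (p > q \<longrightarrow> (\<exists>R. alg_curv_tensor R \<and> spacelike_jordan_IP g R
              \<and> \<not> timelike_jordan_IP g R \<and> \<not> mixed_jordan_IP g R))"
proof -
  note ips = assms(1)
  have h: "sbf g" using ips_sbf[OF ips] .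
  obtain u v where uv: "(\<forall>i<p. g (u i) (u i) = -1) \<and> orthfam g u p \<and> (\<forall>j<q. g (v j) (v j) = 1) \<and> orthfam g v q
     \<and> (\<forall>i<p. \<forall>j<q. g (u i) (v j) = 0)" using frame_exists[OF ips] by blast
  have fr: "frame g p q u v" unfolding frame_def using h uv ips_nondeg[OF ips] by blast
  note fv = frame_vals[OF fr]
  have p3: "p \<ge> 3" and q3: "q \<ge> 3" using assms by auto
  have sp: "plane_of_sig g 0 2 (v i) (v j)" if "i < q" "j < q" "i \<noteq> j" for i j
    by (rule spacelike_orth[OF h]) (use that fv in auto)
  have tp: "plane_of_sig g 2 0 (u i) (u j)" if "i < p" "j < p" "i \<noteq> j" for i j
    by (rule timelike_orth[OF h]) (use that fv in auto)
  have mp: "plane_of_sig g 1 1 (u i) (v j)" if "i < p" "j < q" for i j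
    by (rule mixed_orth[OF h]) (use that fv in auto)
  have opv: "plane_op g (Rt g u v m) (v i) (v j) = Fm g (phiv g u v m (v i)) (phiv g u v m (v j))"
    if "i < q" "j < q" "i \<noteq> j" for i j m
    by (rule plane_op_orth[OF fr]) (use that fv in auto)
  have opu: "plane_op g (Rt g u v m) (u i) (u j) = Fm g (phiv g u v m (u i)) (phiv g u v m (u j))"
    if "i < p" "j < p" "i \<noteq> j" for i j m
    by (rule plane_op_orth[OF fr]) (use that fv in auto)
  have opm: "plane_op g (Rt g u v m) (u i) (v j) = Fm g (phiv g u v m (u i)) (phiv g u v m (v j))"
    if "i < p" "j < q" for i j m
    by (rule plane_op_orth[OF fr]) (use that fv in auto)
  have nz: "Fm g (s *\<^sub>R (u 0 + v 0)) (t *\<^sub>R (u 1 + v 1)) (v 1) \<noteq> 0"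
    if "m \<le> p" "m \<le> q" "2 \<le> m" "s \<noteq> 0" "t \<noteq> 0" for m s t
    by (rule Fm_nonzero[OF fr that(1,2)]) (use that in auto)
  have part1: "\<exists>R. alg_curv_tensor R \<and> IP g R \<and> \<not> spacelike_jordan_IP g R
              \<and> \<not> timelike_jordan_IP g R \<and> \<not> mixed_jordan_IP g R"
  proof (intro exI[of _ "Rt g u v 2"] conjI)
    have m: "2 \<le> p" "2 \<le> q" using p3 q3 by auto
    show "alg_curv_tensor (Rt g u v 2)" by (rule alg_curv_Rt[OF h])
    show "IP g (Rt g u v 2)" by (rule IP_Rt[OF fr m])
    show "\<not> spacelike_jordan_IP g (Rt g u v 2)"
    proof (rule not_jordan[OF sp[of 0 2] sp[of 0 1]])
      show "plane_op g (Rt g u v 2) (v 0) (v 2) = (\<lambda>z. 0)"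
        using opv[of 0 2 2] q3 phi_v[OF fr m, of 2] by (simp add: Fm_zero1[OF h])
      show "plane_op g (Rt g u v 2) (v 0) (v 1) (v 1) \<noteq> 0"
        using opv[of 0 1 2] q3 phi_v[OF fr m, of 0] phi_v[OF fr m, of 1] nz[OF m order.refl, of 1 1] by simp
    qed (use q3 in auto)
    show "\<not> timelike_jordan_IP g (Rt g u v 2)"
    proof (rule not_jordan[OF tp[of 0 2] tp[of 0 1]])
      show "plane_op g (Rt g u v 2) (u 0) (u 2) = (\<lambda>z. 0)"
        using opu[of 0 2 2] p3 phi_u[OF fr m, of 2] by (simp add: Fm_zero1[OF h])
      show "plane_op g (Rt g u v 2) (u 0) (u 1) (v 1) \<noteq> 0"
        using opu[of 0 1 2] p3 phi_u[OF fr m, of 0] phi_u[OF fr m, of 1] nz[OF m order.refl, of "-1" "-1"] by simp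
    qed (use p3 in auto)
    show "\<not> mixed_jordan_IP g (Rt g u v 2)"
    proof (rule not_jordan[OF mp[of 2 0] mp[of 0 1]])
      show "plane_op g (Rt g u v 2) (u 2) (v 0) = (\<lambda>z. 0)"
        using opm[of 2 0 2] p3 q3 phi_u[OF fr m, of 2] by (simp add: Fm_zero2[OF h])
      show "plane_op g (Rt g u v 2) (u 0) (v 1) (v 1) \<noteq> 0"
        using opm[of 0 1 2] p3 q3 phi_u[OF fr m, of 0] phi_v[OF fr m, of 1] nz[OF m order.refl, of "-1" 1] by simp
    qed (use p3 q3 in auto)
  qed
  have part2: "\<exists>R. alg_curv_tensor R \<and> spacelike_jordan_IP g R
              \<and> timelike_jordan_IP g R \<and> \<not> mixed_jordan_IP g R" if pq: "p = q"
  proof (intro exI[of _ "Rt g u v p"] conjI)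
    have m: "p \<le> p" "p \<le> q" using pq by auto
    show "alg_curv_tensor (Rt g u v p)" by (rule alg_curv_Rt[OF h])
    show "spacelike_jordan_IP g (Rt g u v p)"
    proof (rule jordan_sig[OF fr m])
      fix e1 e2 assume "plane_of_sig g 0 2 e1 e2"
      then have pd: "pos_def_on g (span {e1, e2})" by (rule def_plane)
      show "\<forall>x\<in>span {e1, e2}. x \<noteq> 0 \<longrightarrow> g x x \<noteq> 0 \<and> phiv g u v p x \<noteq> 0"
      proof (intro ballI impI)
        fix x assume "x \<in> span {e1, e2}" "x \<noteq> 0"
        then have "g x x > 0" using pd unfolding pos_def_on_def by blast
        moreover have "phiv g u v q x = 0 \<Longrightarrow> g x x \<le> 0" using ker_pos[OF ips fr] pq by simp
        ultimately show "g x x \<noteq> 0 \<and> phiv g u v p x \<noteq> 0" using pq by force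
      qed
    qed
    show "timelike_jordan_IP g (Rt g u v p)"
    proof (rule jordan_sig[OF fr m])
      fix e1 e2 assume "plane_of_sig g 2 0 e1 e2"
      then have pd: "neg_def_on g (span {e1, e2})" by (rule def_plane_neg)
      show "\<forall>x\<in>span {e1, e2}. x \<noteq> 0 \<longrightarrow> g x x \<noteq> 0 \<and> phiv g u v p x \<noteq> 0"
      proof (intro ballI impI)
        fix x assume "x \<in> span {e1, e2}" "x \<noteq> 0"
        then have "g x x < 0" using pd unfolding neg_def_on_def by blast
        moreover have "phiv g u v p x = 0 \<Longrightarrow> g x x \<ge> 0" using ker_neg[OF ips fr] pq by simp
        ultimately show "g x x \<noteq> 0 \<and> phiv g u v p x \<noteq> 0" by force
      qed
    qed
    show "\<not> mixed_jordan_IP g (Rt g u v p)"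
    proof (rule not_jordan[OF mp[of 0 0] mp[of 0 1]])
      show "plane_op g (Rt g u v p) (u 0) (v 0) = (\<lambda>z. 0)"
        using opm[of 0 0 p] p3 q3 phi_u[OF fr m, of 0] phi_v[OF fr m, of 0] Fm_dep[OF h, of "-1" "u 0 + v 0" 1]
        by simp
      show "plane_op g (Rt g u v p) (u 0) (v 1) (v 1) \<noteq> 0"
        using opm[of 0 1 p] p3 q3 phi_u[OF fr m, of 0] phi_v[OF fr m, of 1] nz[OF m, of "-1" 1] by simp
    qed (use p3 q3 in auto)
  qed
  have part3: "\<exists>R. alg_curv_tensor R \<and> spacelike_jordan_IP g R
              \<and> \<not> timelike_jordan_IP g R \<and> \<not> mixed_jordan_IP g R" if pq: "p > q"
  proof (intro exI[of _ "Rt g u v q"] conjI)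
    have m: "q \<le> p" "q \<le> q" using pq by auto
    show "alg_curv_tensor (Rt g u v q)" by (rule alg_curv_Rt[OF h])
    show "spacelike_jordan_IP g (Rt g u v q)"
    proof (rule jordan_sig[OF fr m])
      fix e1 e2 assume "plane_of_sig g 0 2 e1 e2"
      then have pd: "pos_def_on g (span {e1, e2})" by (rule def_plane)
      show "\<forall>x\<in>span {e1, e2}. x \<noteq> 0 \<longrightarrow> g x x \<noteq> 0 \<and> phiv g u v q x \<noteq> 0"
      proof (intro ballI impI)
        fix x assume "x \<in> span {e1, e2}" "x \<noteq> 0"
        then have "g x x > 0" using pd unfolding pos_def_on_def by blast
        moreover have "phiv g u v q x = 0 \<Longrightarrow> g x x \<le> 0" using ker_pos[OF ips fr m(1)] by simp
        ultimately show "g x x \<noteq> 0 \<and> phiv g u v q x \<noteq> 0" by force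
      qed
    qed
    show "\<not> timelike_jordan_IP g (Rt g u v q)"
    proof (rule not_jordan[OF tp[of 0 q] tp[of 0 1]])
      show "plane_op g (Rt g u v q) (u 0) (u q) = (\<lambda>z. 0)"
        using opu[of 0 q q] pq q3 phi_u[OF fr m, of q] by (simp add: Fm_zero1[OF h])
      show "plane_op g (Rt g u v q) (u 0) (u 1) (v 1) \<noteq> 0"
        using opu[of 0 1 q] p3 q3 phi_u[OF fr m, of 0] phi_u[OF fr m, of 1] nz[OF m, of "-1" "-1"] by simp
    qed (use p3 q3 pq in auto)
    show "\<not> mixed_jordan_IP g (Rt g u v q)"
    proof (rule not_jordan[OF mp[of q 0] mp[of 0 1]])
      show "plane_op g (Rt g u v q) (u q) (v 0) = (\<lambda>z. 0)"
        using opm[of q 0 q] pq q3 phi_u[OF fr m, of q] by (simp add: Fm_zero2[OF h])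
      show "plane_op g (Rt g u v q) (u 0) (v 1) (v 1) \<noteq> 0"
        using opm[of 0 1 q] p3 q3 phi_u[OF fr m, of 0] phi_v[OF fr m, of 1] nz[OF m, of "-1" 1] by simp
    qed (use p3 q3 pq in auto)
  qed
  show ?thesis using part1 part2 part3 by blast
qed


end
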